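(* Let $\alpha>3$ be an integer, and let $u\in\mathcal{D}(A^{\alpha/2})_{\mathbb{C}}$, $v\in\mathcal{D}(A^{(\alpha+1)/2})_{\mathbb{C}}$, $w\in\mathcal{D}(A^{\alpha})_{\mathbb{C}}$. Then $$|(B(u,v),A^\alpha w)|\le 2^{\alpha+\frac32} c_A\Big(|u|^{1/2}|Au|^{1/2}|A^{\frac{1+\alpha}{2}}v|+|A^{\alpha/2}u|\,|A^{1/2}v|^{1/2}|A^{3/2}v|^{1/2}\Big)|A^{\alpha/2}w|.$$
   Context: $H$ is the closure in $L^2([0,L]^2)^2$ of the $\mathbb{R}^2$-valued $[0,L]^2$-periodic trigonometric polynomials $v$ with $\nabla\cdot v=0$ and zero mean, with $L^2$ inner product and norm $|\cdot|$; $A=-\Delta$ is the Stokes operator with spectrally defined powers and domains $\mathcal{D}(A^\sigma)$; $B(u,v)=\mathcal{P}((u\cdot\nabla)v)$ with $\mathcal{P}$ the Leray projection. $H_{\mathbb{C}}=H+iH$ with the complex inner product $(u+iv,u'+iv')=(u,u')+(v,v')+i[(v,u')-(u,v')]$, $\mathcal{D}(A^\sigma)_{\mathbb{C}}=\mathcal{D}(A^\sigma)+i\mathcal{D}(A^\sigma)$, and $A$, $B$ extended complex-linearly and complex-bilinearly. $c_A$ is an absolute constant for which the Agmon inequality $|u|_{L^\infty}\le c_A|u|^{1/2}|Au|^{1/2}$ holds in the real space. *)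

theory Defs
  imports "HOL-Analysis.Analysis"
begin

text \<open>Fourier model of the complexified space H_C on the torus [0,L]^2.
An element is represented by its Fourier coefficients
u(x) = sum_k hat u(k) exp(i kappa_k . x), kappa_k = (2 pi / L) k, k in Z^2,
hat u(k) in C^2 (a pair of complex numbers).\<close>

type_synonym field2 = "int \<times> int \<Rightarrow> complex \<times> complex"

definition kappa :: "real \<Rightarrow> int \<times> int \<Rightarrow> real \<times> real" where
  "kappa L k = (2 * pi / L * of_int (fst k), 2 * pi / L * of_int (snd k))"

text \<open>|kappa_k|^2, the eigenvalue of A = -Delta on the k-th mode.\<close>
definition ksq :: "real \<Rightarrow> int \<times> int \<Rightarrow> real" where
  "ksq L k = (fst (kappa L k))\<^sup>2 + (snd (kappa L k))\<^sup>2"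

definition cinner2 :: "complex \<times> complex \<Rightarrow> complex \<times> complex \<Rightarrow> complex" where
  "cinner2 a b = fst a * cnj (fst b) + snd a * cnj (snd b)"

definition cnorm2sq :: "complex \<times> complex \<Rightarrow> real" where
  "cnorm2sq a = (cmod (fst a))\<^sup>2 + (cmod (snd a))\<^sup>2"

definition scal2 :: "complex \<Rightarrow> complex \<times> complex \<Rightarrow> complex \<times> complex" where
  "scal2 c a = (c * fst a, c * snd a)"

definition kdot :: "real \<times> real \<Rightarrow> complex \<times> complex \<Rightarrow> complex" where
  "kdot \<kappa> a = of_real (fst \<kappa>) * fst a + of_real (snd \<kappa>) * snd a"

text \<open>H_C: divergence free (kappa_k . hat u(k) = 0), zero mean (hat u(0) = 0), square summable.\<close>
definition inHc :: "real \<Rightarrow> field2 \<Rightarrow> bool" where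
  "inHc L u \<longleftrightarrow> u (0, 0) = (0, 0) \<and> (\<forall>k. kdot (kappa L k) (u k) = 0)
      \<and> (\<lambda>k. cnorm2sq (u k)) summable_on UNIV"

text \<open>Real elements of H: hat u(-k) = conj (hat u(k)).\<close>
definition realH :: "field2 \<Rightarrow> bool" where
  "realH u \<longleftrightarrow> (\<forall>k. u (- fst k, - snd k) = (cnj (fst (u k)), cnj (snd (u k))))"

text \<open>Spectrally defined powers of the Stokes operator A = -Delta.\<close>
definition Apow :: "real \<Rightarrow> real \<Rightarrow> field2 \<Rightarrow> field2" where
  "Apow L \<sigma> u = (\<lambda>k. scal2 (of_real (ksq L k powr \<sigma>)) (u k))"

definition inD :: "real \<Rightarrow> real \<Rightarrow> field2 \<Rightarrow> bool" where
  "inD L \<sigma> u \<longleftrightarrow> inHc L u \<and> (\<lambda>k. cnorm2sq (Apow L \<sigma> u k)) summable_on UNIV"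

text \<open>L^2([0,L]^2) inner product and norm via Parseval.\<close>
definition hinner :: "real \<Rightarrow> field2 \<Rightarrow> field2 \<Rightarrow> complex" where
  "hinner L u v = of_real (L\<^sup>2) * (\<Sum>\<^sub>\<infinity>k. cinner2 (u k) (v k))"

definition hnorm :: "real \<Rightarrow> field2 \<Rightarrow> real" where
  "hnorm L u = sqrt (L\<^sup>2 * (\<Sum>\<^sub>\<infinity>k. cnorm2sq (u k)))"

definition evalF :: "real \<Rightarrow> field2 \<Rightarrow> real \<times> real \<Rightarrow> complex \<times> complex" where
  "evalF L u x = (\<Sum>\<^sub>\<infinity>k. scal2 (cis (fst (kappa L k) * fst x + snd (kappa L k) * snd x)) (u k))"

definition Linf :: "real \<Rightarrow> field2 \<Rightarrow> real" where
  "Linf L u = (SUP x\<in>UNIV. norm (evalF L u x))"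

definition leray :: "real \<Rightarrow> int \<times> int \<Rightarrow> complex \<times> complex \<Rightarrow> complex \<times> complex" where
  "leray L k a = (if k = (0, 0) then (0, 0) else
     (fst a - kdot (kappa L k) a / of_real (ksq L k) * of_real (fst (kappa L k)),
      snd a - kdot (kappa L k) a / of_real (ksq L k) * of_real (snd (kappa L k))))"

text \<open>B(u,v) = P((u . grad) v): convolution of hat u(p) . (i kappa_q) hat v(q), p + q = k.\<close>
definition Bop :: "real \<Rightarrow> field2 \<Rightarrow> field2 \<Rightarrow> field2" where
  "Bop L u v = (\<lambda>k. leray L k
     (\<Sum>\<^sub>\<infinity>p. scal2 (\<i> * kdot (kappa L (fst k - fst p, snd k - snd p)) (u p))
                     (v (fst k - fst p, snd k - snd p))))"

end

theory Submission
  imports Defs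
begin

lemma fin_bound_summable:
  fixes f :: "'a \<Rightarrow> real"
  assumes nn: "\<And>x. f x \<ge> 0" and b: "\<And>F. finite F \<Longrightarrow> sum f F \<le> M"
  shows "f summable_on UNIV \<and> infsum f UNIV \<le> M"
proof -
  have s: "f summable_on UNIV"
    by (rule nonneg_bdd_above_summable_on) (use nn b in \<open>auto intro!: bdd_aboveI2\<close>)
  moreover have "infsum f UNIV \<le> M"
    by (rule infsum_le_finite_sums[OF s]) (use b in auto)
  ultimately show ?thesis by blast
qed

lemma sum_le_infsum_nn:
  fixes f :: "'a \<Rightarrow> real"
  assumes "f summable_on UNIV" "finite F" "\<And>x. f x \<ge> 0"
  shows "sum f F \<le> infsum f UNIV"
  by (rule finite_sum_le_infsum) (use assms in auto)

lemma le_infsum_nn: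
  fixes f :: "'a \<Rightarrow> real"
  assumes "f summable_on UNIV" "\<And>x. f x \<ge> 0"
  shows "f x \<le> infsum f UNIV"
  using sum_le_infsum_nn[OF assms(1) _ assms(2), of "{x}"] by simp

definition l2 :: "('a \<Rightarrow> real) \<Rightarrow> real" where
  "l2 f = sqrt (infsum (\<lambda>x. (f x)\<^sup>2) UNIV)"

lemma l2_nonneg: "l2 f \<ge> 0"
  unfolding l2_def by (simp add: infsum_nonneg)

lemma le_l2:
  fixes f :: "'a \<Rightarrow> real"
  assumes "(\<lambda>x. (f x)\<^sup>2) summable_on UNIV" "f x \<ge> 0"
  shows "f x \<le> l2 f"
proof -
  have "(f x)\<^sup>2 \<le> infsum (\<lambda>x. (f x)\<^sup>2) UNIV"
    by (rule le_infsum_nn[OF assms(1)]) simp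
  then show ?thesis unfolding l2_def using assms(2) real_le_rsqrt by blast
qed

lemma finite_CS:
  fixes a b :: "'a \<Rightarrow> real"
  shows "(\<Sum>i\<in>I. a i * b i) \<le> sqrt (\<Sum>i\<in>I. (a i)\<^sup>2) * sqrt (\<Sum>i\<in>I. (b i)\<^sup>2)"
proof -
  have "(\<Sum>i\<in>I. a i * b i)\<^sup>2 \<le> (\<Sum>i\<in>I. (a i)\<^sup>2) * (\<Sum>i\<in>I. (b i)\<^sup>2)"
    by (rule Cauchy_Schwarz_ineq_sum)
  then have "\<bar>\<Sum>i\<in>I. a i * b i\<bar> \<le> sqrt ((\<Sum>i\<in>I. (a i)\<^sup>2) * (\<Sum>i\<in>I. (b i)\<^sup>2))"
    using real_le_rsqrt real_sqrt_abs by (metis real_sqrt_le_mono)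
  then show ?thesis by (simp add: real_sqrt_mult)
qed

lemma sum_sq_le_l2:
  fixes f :: "'a \<Rightarrow> real"
  assumes "(\<lambda>x. (f x)\<^sup>2) summable_on UNIV" "finite F"
  shows "sqrt (\<Sum>i\<in>F. (f i)\<^sup>2) \<le> l2 f"
  unfolding l2_def
  by (rule real_sqrt_le_mono, rule sum_le_infsum_nn[OF assms]) simp

lemma infsum_CS:
  fixes a b :: "'a \<Rightarrow> real"
  assumes "\<And>x. a x \<ge> 0" "\<And>x. b x \<ge> 0"
    "(\<lambda>x. (a x)\<^sup>2) summable_on UNIV" "(\<lambda>x. (b x)\<^sup>2) summable_on UNIV"
  shows "(\<lambda>x. a x * b x) summable_on UNIV \<and> infsum (\<lambda>x. a x * b x) UNIV \<le> l2 a * l2 b"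
proof (rule fin_bound_summable)
  show "0 \<le> a x * b x" for x using assms by simp
  fix F :: "'a set" assume F: "finite F"
  have "(\<Sum>i\<in>F. a i * b i) \<le> sqrt (\<Sum>i\<in>F. (a i)\<^sup>2) * sqrt (\<Sum>i\<in>F. (b i)\<^sup>2)"
    by (rule finite_CS)
  also have "\<dots> \<le> l2 a * l2 b"
    by (rule mult_mono) (use sum_sq_le_l2[OF assms(3) F] sum_sq_le_l2[OF assms(4) F] l2_nonneg in \<open>auto intro: sum_nonneg\<close>)
  finally show "(\<Sum>i\<in>F. a i * b i) \<le> l2 a * l2 b" .
qed

lemma l1_times_bounded:
  fixes a b :: "'a \<Rightarrow> real"
  assumes "a summable_on UNIV" "\<And>x. a x \<ge> 0" "\<And>x. b x \<ge> 0" "\<And>x. b x \<le> M"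
  shows "(\<lambda>x. a x * b x) summable_on UNIV \<and> infsum (\<lambda>x. a x * b x) UNIV \<le> infsum a UNIV * M"
proof -
  have s: "(\<lambda>x. a x * M) summable_on UNIV" using assms(1) by (rule summable_on_cmult_left)
  have le: "a x * b x \<le> a x * M" for x using assms by (simp add: mult_left_mono)
  have s2: "(\<lambda>x. a x * b x) summable_on UNIV"
    by (rule summable_on_comparison_test[OF s]) (use le assms in auto)
  have "infsum (\<lambda>x. a x * b x) UNIV \<le> infsum (\<lambda>x. a x * M) UNIV"
    by (rule infsum_mono[OF s2 s]) (use le in auto)
  also have "\<dots> = infsum a UNIV * M" by (rule infsum_cmult_left) (use assms(1) in auto)
  finally show ?thesis using s2 by blast
qed

lemma infsum_finsum:
  fixes f :: "'b \<Rightarrow> 'a \<Rightarrow> real"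
  assumes "finite F" "\<And>i. i \<in> F \<Longrightarrow> f i summable_on UNIV"
  shows "(\<lambda>x. \<Sum>i\<in>F. f i x) summable_on UNIV \<and> infsum (\<lambda>x. \<Sum>i\<in>F. f i x) UNIV = (\<Sum>i\<in>F. infsum (f i) UNIV)"
  using assms
proof (induction F rule: finite_induct)
  case empty then show ?case by simp
next
  case (insert j F)
  have sj: "f j summable_on UNIV" using insert by auto
  have IH: "(\<lambda>x. \<Sum>i\<in>F. f i x) summable_on UNIV \<and> infsum (\<lambda>x. \<Sum>i\<in>F. f i x) UNIV = (\<Sum>i\<in>F. infsum (f i) UNIV)"
    using insert by auto
  have e: "(\<lambda>x. \<Sum>i\<in>insert j F. f i x) = (\<lambda>x. f j x + (\<Sum>i\<in>F. f i x))"
    using insert by auto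
  show ?case unfolding e using insert IH sj
    by (simp add: summable_on_add infsum_add)
qed

type_synonym idx = "int \<times> int"

lemma bij_minus: "bij_betw (\<lambda>p::idx. k - p) UNIV UNIV"
  by (rule bij_betwI[where g="\<lambda>p. k - p"]) auto

lemma inj_minus_right: "inj (\<lambda>k::idx. k - p)"
  by (auto intro: injI)

lemma young:
  fixes a b c :: "idx \<Rightarrow> real"
  assumes a: "a summable_on UNIV" "\<And>x. a x \<ge> 0"
    and b: "(\<lambda>x. (b x)\<^sup>2) summable_on UNIV" "\<And>x. b x \<ge> 0"
    and c: "(\<lambda>x. (c x)\<^sup>2) summable_on UNIV" "\<And>x. c x \<ge> 0"
  shows "(\<lambda>k. infsum (\<lambda>p. a p * b (k - p)) UNIV * c k) summable_on UNIV
    \<and> infsum (\<lambda>k. infsum (\<lambda>p. a p * b (k - p)) UNIV * c k) UNIV \<le> infsum a UNIV * (l2 b * l2 c)"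
proof (rule fin_bound_summable)
  have sk: "(\<lambda>p. a p * b (k - p)) summable_on UNIV" for k
    using l1_times_bounded[OF a, of "\<lambda>p. b (k - p)" "l2 b"] le_l2[OF b(1) b(2)] b(2) by blast
  show "0 \<le> infsum (\<lambda>p. a p * b (k - p)) UNIV * c k" for k
    using a(2) b(2) c(2) by (simp add: infsum_nonneg)
  fix F :: "idx set" assume F: "finite F"
  have "(\<Sum>k\<in>F. infsum (\<lambda>p. a p * b (k - p)) UNIV * c k)
      = (\<Sum>k\<in>F. infsum (\<lambda>p. a p * b (k - p) * c k) UNIV)"
    by (rule sum.cong[OF refl], rule infsum_cmult_left[symmetric]) (use sk in auto)
  also have "\<dots> = infsum (\<lambda>p. \<Sum>k\<in>F. a p * b (k - p) * c k) UNIV"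
    using infsum_finsum[OF F, of "\<lambda>k p. a p * b (k - p) * c k"] sk
    by (simp add: summable_on_cmult_left)
  also have "\<dots> \<le> infsum (\<lambda>p. a p * (l2 b * l2 c)) UNIV"
  proof (rule infsum_mono)
    show "(\<lambda>p. \<Sum>k\<in>F. a p * b (k - p) * c k) summable_on UNIV"
      using infsum_finsum[OF F, of "\<lambda>k p. a p * b (k - p) * c k"] sk
      by (simp add: summable_on_cmult_left)
    show "(\<lambda>p. a p * (l2 b * l2 c)) summable_on UNIV"
      using a(1) by (rule summable_on_cmult_left)
    fix p
    have "(\<Sum>k\<in>F. b (k - p) * c k) \<le> sqrt (\<Sum>k\<in>F. (b (k - p))\<^sup>2) * sqrt (\<Sum>k\<in>F. (c k)\<^sup>2)"
      by (rule finite_CS)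
    also have "\<dots> \<le> l2 b * l2 c"
    proof (rule mult_mono)
      have "(\<Sum>k\<in>F. (b (k - p))\<^sup>2) = (\<Sum>q\<in>(\<lambda>k. k - p) ` F. (b q)\<^sup>2)"
        by (subst sum.reindex) (auto intro: inj_on_subset[OF inj_minus_right])
      then show "sqrt (\<Sum>k\<in>F. (b (k - p))\<^sup>2) \<le> l2 b"
        using sum_sq_le_l2[OF b(1), of "(\<lambda>k. k - p) ` F"] F by simp
      show "sqrt (\<Sum>k\<in>F. (c k)\<^sup>2) \<le> l2 c" using sum_sq_le_l2[OF c(1) F] .
    qed (auto simp: l2_nonneg intro: sum_nonneg)
    finally have "(\<Sum>k\<in>F. b (k - p) * c k) \<le> l2 b * l2 c" .
    then have "a p * (\<Sum>k\<in>F. b (k - p) * c k) \<le> a p * (l2 b * l2 c)"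
      using a(2)[of p] by (rule mult_left_mono)
    then show "(\<Sum>k\<in>F. a p * b (k - p) * c k) \<le> a p * (l2 b * l2 c)"
      by (simp add: sum_distrib_left mult.assoc)
  qed
  also have "\<dots> = infsum a UNIV * (l2 b * l2 c)"
    by (rule infsum_cmult_left) (use a in auto)
  finally show "(\<Sum>k\<in>F. infsum (\<lambda>p. a p * b (k - p)) UNIV * c k) \<le> infsum a UNIV * (l2 b * l2 c)" .
qed

lemma arctan_step:
  fixes s n :: real
  assumes s: "s > 0" and n: "n \<ge> 1"
  shows "1 / (s\<^sup>2 + n\<^sup>2) \<le> (arctan (n / s) - arctan ((n - 1) / s)) / s"
proof -
  have ab: "(n - 1) / s < n / s" using s by (simp add: divide_strict_right_mono)
  obtain z where z: "(n - 1) / s < z" "z < n / s"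
    and eq: "arctan (n / s) - arctan ((n - 1) / s) = (n / s - (n - 1) / s) * inverse (1 + z\<^sup>2)"
    using MVT2[OF ab, of arctan "\<lambda>x. inverse (1 + x\<^sup>2)"] DERIV_arctan by blast
  have z0: "z \<ge> 0" using z(1) n s by (smt (verit) divide_nonneg_pos)
  have "z\<^sup>2 \<le> (n / s)\<^sup>2" using z0 z(2) by (intro power_mono) auto
  then have zz: "1 + z\<^sup>2 \<le> (s\<^sup>2 + n\<^sup>2) / s\<^sup>2" using s by (simp add: power_divide add_divide_distrib)
  have d: "n / s - (n - 1) / s = 1 / s" using s by (simp add: diff_divide_distrib)
  have "inverse ((s\<^sup>2 + n\<^sup>2) / s\<^sup>2) \<le> inverse (1 + z\<^sup>2)"
    by (rule le_imp_inverse_le[OF zz]) (simp add: add_pos_nonneg)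
  then have "s\<^sup>2 / (s\<^sup>2 + n\<^sup>2) \<le> inverse (1 + z\<^sup>2)" by (simp add: inverse_eq_divide)
  then have "(1 / s) * (s\<^sup>2 / (s\<^sup>2 + n\<^sup>2)) \<le> (1 / s) * inverse (1 + z\<^sup>2)"
    using s by (intro mult_left_mono) auto
  then have "s / (s\<^sup>2 + n\<^sup>2) \<le> arctan (n / s) - arctan ((n - 1) / s)"
    using eq d s by (simp add: power2_eq_square)
  then have "s / (s\<^sup>2 + n\<^sup>2) / s \<le> (arctan (n / s) - arctan ((n - 1) / s)) / s"
    using s by (intro divide_right_mono) auto
  then show ?thesis using s by simp
qed

lemma sym_sum:
  fixes \<mu> :: real
  assumes mu: "\<mu> > 0"
  shows "(\<Sum>n\<in>{-int N..int N}. 1 / (\<mu> + (real_of_int n)\<^sup>2)) \<le> 1 / \<mu> + 2 * arctan (real N / sqrt \<mu>) / sqrt \<mu>"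
proof (induction N)
  case 0 then show ?case by simp
next
  case (Suc N)
  define s where "s = sqrt \<mu>"
  have s: "s > 0" "s\<^sup>2 = \<mu>" using mu by (auto simp: s_def)
  have set: "{-int (Suc N)..int (Suc N)} = insert (int N + 1) (insert (- int N - 1) {-int N..int N})"
    by auto
  have st: "1 / (\<mu> + (real N + 1)\<^sup>2) \<le> (arctan ((real N + 1) / s) - arctan (real N / s)) / s"
    using arctan_step[OF s(1), of "real N + 1"] s(2) by simp
  have "(\<Sum>n\<in>{-int (Suc N)..int (Suc N)}. 1 / (\<mu> + (real_of_int n)\<^sup>2))
      = 2 * (1 / (\<mu> + (real N + 1)\<^sup>2)) + (\<Sum>n\<in>{-int N..int N}. 1 / (\<mu> + (real_of_int n)\<^sup>2))"
    unfolding set by (simp add: power2_eq_square algebra_simps)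
  also have "\<dots> \<le> 2 * ((arctan ((real N + 1) / s) - arctan (real N / s)) / s) + (1 / \<mu> + 2 * arctan (real N / s) / s)"
    using st Suc.IH unfolding s_def by linarith
  also have "\<dots> = 1 / \<mu> + 2 * arctan (real (Suc N) / s) / s"
    using s by (simp add: field_simps)
  finally show ?case unfolding s_def .
qed

lemma sum1d:
  fixes \<mu> :: real and A :: "int set"
  assumes mu: "\<mu> > 0" and A: "finite A"
  shows "(\<Sum>n\<in>A. 1 / (\<mu> + (real_of_int n)\<^sup>2)) \<le> 1 / \<mu> + pi / sqrt \<mu>"
proof -
  define N where "N = nat (\<Sum>n\<in>A. \<bar>n\<bar>)"
  have sub: "A \<subseteq> {-int N..int N}"
  proof
    fix x assume x: "x \<in> A"
    have "\<bar>x\<bar> \<le> (\<Sum>n\<in>A. \<bar>n\<bar>)" using member_le_sum[OF x, of abs] A by simp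
    then show "x \<in> {-int N..int N}" unfolding N_def by auto
  qed
  have "(\<Sum>n\<in>A. 1 / (\<mu> + (real_of_int n)\<^sup>2)) \<le> (\<Sum>n\<in>{-int N..int N}. 1 / (\<mu> + (real_of_int n)\<^sup>2))"
    by (rule sum_mono2[OF _ sub]) (use mu in \<open>auto intro!: add_pos_nonneg\<close>)
  also have "\<dots> \<le> 1 / \<mu> + 2 * arctan (real N / sqrt \<mu>) / sqrt \<mu>" by (rule sym_sum[OF mu])
  also have "\<dots> \<le> 1 / \<mu> + pi / sqrt \<mu>"
  proof -
    have "2 * arctan (real N / sqrt \<mu>) \<le> pi" using arctan_bounded[of "real N / sqrt \<mu>"] by linarith
    then show ?thesis using mu by (simp add: divide_right_mono)
  qed
  finally show ?thesis .
qed

lemma lattice: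
  fixes lam :: real and F :: "(int \<times> int) set"
  assumes lam: "lam \<ge> 1" and F: "finite F"
  shows "(\<Sum>k\<in>F. 1 / (lam + (real_of_int (fst k))\<^sup>2 + (real_of_int (snd k))\<^sup>2)\<^sup>2) \<le> 16 / lam"
proof -
  define \<mu> where "\<mu> = lam / 2"
  have mu: "\<mu> > 0" "\<mu> \<ge> 1/2" using lam by (auto simp: \<mu>_def)
  define g where "g = (\<lambda>n::int. 1 / (\<mu> + (real_of_int n)\<^sup>2))"
  have gnn: "g n \<ge> 0" for n using mu by (simp add: g_def add_pos_nonneg less_imp_le)
  have pt: "1 / (lam + a + b)\<^sup>2 \<le> 1/4 * ((1 / (\<mu> + a)) * (1 / (\<mu> + b)))" if ab: "a \<ge> 0" "b \<ge> 0" for a b :: real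
  proof -
    have p1: "\<mu> + a > 0" "\<mu> + b > 0" using ab mu by auto
    have "4 * ((\<mu> + a) * (\<mu> + b)) \<le> (lam + a + b)\<^sup>2"
      unfolding \<mu>_def using sum_squares_ge_zero[of "\<mu> + a - (\<mu> + b)" 0]
      by (simp add: power2_eq_square algebra_simps)
    then have "1 / (lam + a + b)\<^sup>2 \<le> 1 / (4 * ((\<mu> + a) * (\<mu> + b)))"
      using p1 lam ab by (intro divide_left_mono) auto
    then show ?thesis by simp
  qed
  have "(\<Sum>k\<in>F. 1 / (lam + (real_of_int (fst k))\<^sup>2 + (real_of_int (snd k))\<^sup>2)\<^sup>2)
      \<le> (\<Sum>k\<in>F. 1/4 * (g (fst k) * g (snd k)))"
    by (rule sum_mono) (unfold g_def, rule pt, auto)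
  also have "\<dots> \<le> (\<Sum>k\<in>fst ` F \<times> snd ` F. 1/4 * (g (fst k) * g (snd k)))"
    by (rule sum_mono2) (use F gnn in \<open>auto intro!: mult_nonneg_nonneg simp: image_iff; force\<close>)+
  also have "\<dots> = 1/4 * ((\<Sum>n\<in>fst ` F. g n) * (\<Sum>n\<in>snd ` F. g n))"
  proof -
    have "(\<Sum>n\<in>fst ` F. g n) * (\<Sum>n\<in>snd ` F. g n) = (\<Sum>k\<in>fst ` F \<times> snd ` F. g (fst k) * g (snd k))"
      unfolding sum_product sum.cartesian_product by (simp add: case_prod_beta)
    then show ?thesis by (simp add: sum_distrib_left)
  qed
  also have "\<dots> \<le> 1/4 * ((1 / \<mu> + pi / sqrt \<mu>) * (1 / \<mu> + pi / sqrt \<mu>))"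
    using sum1d[OF mu(1), of "fst ` F"] sum1d[OF mu(1), of "snd ` F"] F mu
    by (intro mult_left_mono mult_mono) (auto simp: g_def intro!: sum_nonneg gnn[unfolded g_def] add_nonneg_nonneg)
  also have "\<dots> \<le> 16 / lam"
  proof -
    define t where "t = sqrt \<mu>"
    have t: "t > 0" "t\<^sup>2 = \<mu>" using mu by (auto simp: t_def)
    have t23: "t \<ge> 2/3"
    proof (rule ccontr)
      assume "\<not> t \<ge> 2/3"
      then have "t\<^sup>2 < (2/3)\<^sup>2" using t by (intro power_strict_mono) auto
      then show False using t mu by (simp add: power2_eq_square)
    qed
    have it: "1 / t \<le> 3/2" using t23 t by (simp add: field_simps)
    have q: "(1 / t + pi) \<le> 11/2" using it pi_less_4 by linarith
    have "(1 / t + pi) * (1 / t + pi) \<le> 11/2 * (11/2)" using q it t by (intro mult_mono) auto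
    then have q2: "(1 / t + pi) * (1 / t + pi) \<le> 32" by simp
    have e: "(1 / \<mu> + pi / sqrt \<mu>) = (1 / t) * (1 / t + pi)"
      using t mu unfolding t_def[symmetric] by (simp add: field_simps power2_eq_square)
    have "1/4 * ((1 / \<mu> + pi / sqrt \<mu>) * (1 / \<mu> + pi / sqrt \<mu>)) = 1/4 * (1/\<mu>) * ((1 / t + pi) * (1 / t + pi))"
      unfolding e using t by (simp add: field_simps power2_eq_square)
    also have "\<dots> \<le> 1/4 * (1/\<mu>) * 32" using q2 mu by (intro mult_left_mono) auto
    also have "\<dots> = 16 / lam" by (simp add: \<mu>_def)
    finally show ?thesis .
  qed
  finally show ?thesis .
qed

definition ks :: "real \<Rightarrow> int \<times> int \<Rightarrow> real" where
  "ks L k = sqrt (ksq L k)"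

lemma ksq_eq: "ksq L k = (2 * pi / L)\<^sup>2 * ((real_of_int (fst k))\<^sup>2 + (real_of_int (snd k))\<^sup>2)"
  unfolding ksq_def kappa_def by (simp add: power_mult_distrib power_divide algebra_simps add_divide_distrib)

lemma ksq_nonneg: "ksq L k \<ge> 0"
  unfolding ksq_def by simp

lemma ks_nonneg: "ks L k \<ge> 0"
  unfolding ks_def using ksq_nonneg by simp

lemma int_sq_ge1:
  fixes n :: int
  assumes "n \<noteq> 0"
  shows "1 \<le> (real_of_int n)\<^sup>2"
proof -
  have "1 \<le> \<bar>n\<bar>" using assms by linarith
  then have "1 \<le> \<bar>real_of_int n\<bar>" by linarith
  then show ?thesis by (metis power2_abs one_le_power)
qed

lemma ksq_ge:
  assumes "k \<noteq> 0"
  shows "ksq L k \<ge> (2 * pi / L)\<^sup>2"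
proof -
  have "(real_of_int (fst k))\<^sup>2 + (real_of_int (snd k))\<^sup>2 \<ge> 1"
  proof (cases "fst k = 0")
    case True
    then have "snd k \<noteq> 0" using assms by (simp add: prod_eq_iff)
    then show ?thesis using int_sq_ge1[of "snd k"] zero_le_power2[of "real_of_int (fst k)"] by linarith
  next
    case False
    then show ?thesis using int_sq_ge1[of "fst k"] zero_le_power2[of "real_of_int (snd k)"] by linarith
  qed
  then show ?thesis unfolding ksq_eq by (simp add: mult_le_cancel_left1)
qed

lemma ks_ge:
  assumes "k \<noteq> 0" "L > 0"
  shows "ks L k \<ge> 2 * pi / L"
proof -
  have "sqrt ((2 * pi / L)\<^sup>2) \<le> ks L k" unfolding ks_def using ksq_ge[OF assms(1)] by (rule real_sqrt_le_mono)
  then show ?thesis using assms by simp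
qed

lemma ks_sq: "(ks L k)\<^sup>2 = ksq L k"
  unfolding ks_def using ksq_nonneg by simp

lemma ks_norm: "ks L k = norm (kappa L k)"
  unfolding ks_def ksq_def by (simp add: norm_prod_def)

lemma kappa_add: "kappa L k = kappa L p + kappa L (k - p)"
  unfolding kappa_def by (simp add: algebra_simps diff_divide_distrib)

lemma ks_tri: "ks L k \<le> ks L p + ks L (k - p)"
  unfolding ks_norm by (subst kappa_add[of L k p]) (rule norm_triangle_ineq)

lemma ks_zero: "ks L 0 = 0"
  unfolding ks_def ksq_eq by simp

lemma wiener:
  fixes f :: "int \<times> int \<Rightarrow> real"
  assumes L: "L > 0" and nn: "\<And>k. f k \<ge> 0" and f0: "f 0 = 0"
    and s1: "(\<lambda>k. (f k)\<^sup>2) summable_on UNIV"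
    and s2: "(\<lambda>k. (ks L k ^ 2 * f k)\<^sup>2) summable_on UNIV"
  shows "f summable_on UNIV \<and> infsum f UNIV \<le> 4 / pi * L * sqrt (l2 f) * sqrt (l2 (\<lambda>k. ks L k ^ 2 * f k))"
proof -
  define g where "g k = ks L k ^ 2 * f k" for k
  define A where "A = l2 f"
  define B where "B = l2 g"
  define c where "c = 2 * pi / L"
  have c: "c > 0" using L by (simp add: c_def)
  have g_eq: "g k = ksq L k * f k" for k unfolding g_def ks_sq ..
  have gnn: "g k \<ge> 0" for k unfolding g_eq using nn ksq_nonneg by simp
  have s2': "(\<lambda>k. (g k)\<^sup>2) summable_on UNIV" using s2 unfolding g_def .
  have A0: "A \<ge> 0" "B \<ge> 0" unfolding A_def B_def by (auto simp: l2_nonneg)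
  show ?thesis
  proof (cases "A = 0")
    case True
    have "f k = 0" for k using le_l2[OF s1 nn[of k]] nn[of k] True unfolding A_def by simp
    then have "f = (\<lambda>_. 0)" by auto
    then show ?thesis using L A0 unfolding g_def[symmetric] B_def[symmetric] A_def[symmetric] by simp
  next
    case False
    then have Apos: "A > 0" using A0 by simp
    have ptw: "(c\<^sup>2)\<^sup>2 * (f k)\<^sup>2 \<le> (g k)\<^sup>2" for k
    proof (cases "k = 0")
      case True then show ?thesis using f0 g_eq by simp
    next
      case False
      have "c\<^sup>2 * f k \<le> g k" unfolding g_eq c_def using ksq_ge[OF False, of L] nn[of k]
        by (simp add: mult_right_mono)
      then have "(c\<^sup>2 * f k)\<^sup>2 \<le> (g k)\<^sup>2" using nn[of k] by (intro power_mono) auto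
      then show ?thesis by (simp add: power_mult_distrib)
    qed
    have "infsum (\<lambda>k. (c\<^sup>2)\<^sup>2 * (f k)\<^sup>2) UNIV \<le> infsum (\<lambda>k. (g k)\<^sup>2) UNIV"
      by (rule infsum_mono[OF summable_on_cmult_right[OF s1] s2' ptw])
    then have "(c\<^sup>2)\<^sup>2 * A\<^sup>2 \<le> B\<^sup>2"
      unfolding A_def B_def l2_def using infsum_cmult_right[of "(c\<^sup>2)\<^sup>2" "\<lambda>k. (f k)\<^sup>2" UNIV] s1
      by (simp add: infsum_nonneg)
    then have "(c\<^sup>2 * A)\<^sup>2 \<le> B\<^sup>2" by (simp add: power_mult_distrib)
    then have BA: "c\<^sup>2 * A \<le> B" using A0(2) by (rule power2_le_imp_le)
    define \<mu> where "\<mu> = B / A"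
    have mu: "\<mu> \<ge> c\<^sup>2" using BA Apos unfolding \<mu>_def by (simp add: field_simps)
    have "c\<^sup>2 > 0" using c by simp
    then have mupos: "\<mu> > 0" using mu by linarith
    have muA: "\<mu> * A = B" using Apos unfolding \<mu>_def by simp
    have Asq: "A\<^sup>2 = infsum (\<lambda>k. (f k)\<^sup>2) UNIV" unfolding A_def l2_def by (simp add: infsum_nonneg)
    have Bsq: "B\<^sup>2 = infsum (\<lambda>k. (g k)\<^sup>2) UNIV" unfolding B_def l2_def by (simp add: infsum_nonneg)
    have fin: "sum f F \<le> 4 / pi * L * sqrt A * sqrt B" if F: "finite F" for F
    proof -
      have "sum f F = (\<Sum>k\<in>F. ((\<mu> + ksq L k) * f k) * (1 / (\<mu> + ksq L k)))"
      proof (rule sum.cong[OF refl])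
        fix k
        have "\<mu> + ksq L k > 0" using mupos ksq_nonneg[of L k] by linarith
        then show "f k = ((\<mu> + ksq L k) * f k) * (1 / (\<mu> + ksq L k))" by simp
      qed
      also have "\<dots> \<le> sqrt (\<Sum>k\<in>F. ((\<mu> + ksq L k) * f k)\<^sup>2) * sqrt (\<Sum>k\<in>F. (1 / (\<mu> + ksq L k))\<^sup>2)"
        by (rule finite_CS)
      also have "\<dots> \<le> (2 * B) * (4 / (c * sqrt \<mu>))"
      proof (rule mult_mono)
        have "(\<Sum>k\<in>F. ((\<mu> + ksq L k) * f k)\<^sup>2) \<le> (\<Sum>k\<in>F. 2 * \<mu>\<^sup>2 * (f k)\<^sup>2 + 2 * (g k)\<^sup>2)"
        proof (rule sum_mono)
          fix k
          have "0 \<le> (\<mu> * f k - g k)\<^sup>2" by simp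
          then show "((\<mu> + ksq L k) * f k)\<^sup>2 \<le> 2 * \<mu>\<^sup>2 * (f k)\<^sup>2 + 2 * (g k)\<^sup>2"
            unfolding g_eq by (simp add: power2_eq_square algebra_simps)
        qed
        also have "\<dots> = 2 * \<mu>\<^sup>2 * (\<Sum>k\<in>F. (f k)\<^sup>2) + 2 * (\<Sum>k\<in>F. (g k)\<^sup>2)"
          by (simp add: sum.distrib sum_distrib_left)
        also have "\<dots> \<le> 2 * \<mu>\<^sup>2 * A\<^sup>2 + 2 * B\<^sup>2"
          unfolding Asq Bsq
          using sum_le_infsum_nn[OF s1 F] sum_le_infsum_nn[OF s2' F]
          by (intro add_mono mult_left_mono) auto
        also have "\<dots> = (2 * B)\<^sup>2"
        proof -
          have "\<mu>\<^sup>2 * A\<^sup>2 = B\<^sup>2" using muA by (metis power_mult_distrib)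
          then show ?thesis by (simp add: power_mult_distrib)
        qed
        finally have X: "(\<Sum>k\<in>F. ((\<mu> + ksq L k) * f k)\<^sup>2) \<le> (2 * B)\<^sup>2" .
        show "sqrt (\<Sum>k\<in>F. ((\<mu> + ksq L k) * f k)\<^sup>2) \<le> 2 * B"
        proof -
          have "sqrt ((2 * B)\<^sup>2) = 2 * B" using A0 by (simp only: real_sqrt_abs abs_of_nonneg mult_nonneg_nonneg)
          then show ?thesis using real_sqrt_le_mono[OF X] by linarith
        qed
        have lat: "(\<Sum>k\<in>F. 1 / (\<mu> / c\<^sup>2 + (real_of_int (fst k))\<^sup>2 + (real_of_int (snd k))\<^sup>2)\<^sup>2) \<le> 16 / (\<mu> / c\<^sup>2)"
          by (rule lattice[OF _ F]) (use mu c in \<open>simp add: field_simps\<close>)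
        have "(\<Sum>k\<in>F. (1 / (\<mu> + ksq L k))\<^sup>2) = (\<Sum>k\<in>F. 1 / (\<mu> / c\<^sup>2 + (real_of_int (fst k))\<^sup>2 + (real_of_int (snd k))\<^sup>2)\<^sup>2) / (c\<^sup>2)\<^sup>2"
          unfolding sum_divide_distrib
        proof (rule sum.cong[OF refl])
          fix k
          have "\<mu> + ksq L k = c\<^sup>2 * (\<mu> / c\<^sup>2 + (real_of_int (fst k))\<^sup>2 + (real_of_int (snd k))\<^sup>2)"
            unfolding ksq_eq c_def[symmetric] using c by (simp add: field_simps)
          then show "(1 / (\<mu> + ksq L k))\<^sup>2 = 1 / (\<mu> / c\<^sup>2 + (real_of_int (fst k))\<^sup>2 + (real_of_int (snd k))\<^sup>2)\<^sup>2 / (c\<^sup>2)\<^sup>2"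
            by (simp add: power_divide power_mult_distrib)
        qed
        also have "\<dots> \<le> 16 / (\<mu> / c\<^sup>2) / (c\<^sup>2)\<^sup>2"
          by (rule divide_right_mono[OF lat]) simp
        also have "\<dots> = (4 / (c * sqrt \<mu>))\<^sup>2"
          using c mupos by (simp add: field_simps power2_eq_square)
        finally have Y: "(\<Sum>k\<in>F. (1 / (\<mu> + ksq L k))\<^sup>2) \<le> (4 / (c * sqrt \<mu>))\<^sup>2" .
        show "sqrt (\<Sum>k\<in>F. (1 / (\<mu> + ksq L k))\<^sup>2) \<le> 4 / (c * sqrt \<mu>)"
        proof -
          have "sqrt ((4 / (c * sqrt \<mu>))\<^sup>2) = 4 / (c * sqrt \<mu>)" using c mupos
            by (simp only: real_sqrt_abs abs_of_nonneg) simp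
          then show ?thesis using real_sqrt_le_mono[OF Y] by linarith
        qed
        show "0 \<le> sqrt (\<Sum>k\<in>F. (1 / (\<mu> + ksq L k))\<^sup>2)" by (simp add: sum_nonneg)
        show "0 \<le> 2 * B" using A0 by simp
      qed
      also have "\<dots> = 4 / pi * L * sqrt A * sqrt B"
      proof -
        have sm: "sqrt \<mu> = sqrt B / sqrt A" unfolding \<mu>_def by (simp add: real_sqrt_divide)
        have Bpos: "B > 0" using BA Apos c by (smt (verit) mult_pos_pos zero_less_power)
        have sB: "sqrt B > 0" "sqrt A > 0" using Bpos Apos by auto
        have "2 * B * (4 / (c * sqrt \<mu>)) = 2 * (sqrt B * sqrt B) * (4 / (c * (sqrt B / sqrt A)))"
          unfolding sm using Bpos by simp
        also have "\<dots> = 8 / c * sqrt A * sqrt B" using sB c by (simp add: field_simps)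
        also have "\<dots> = 4 / pi * L * sqrt A * sqrt B" unfolding c_def using L by (simp add: field_simps)
        finally show ?thesis .
      qed
      finally show ?thesis .
    qed
    have "f summable_on UNIV \<and> infsum f UNIV \<le> 4 / pi * L * sqrt A * sqrt B"
      by (rule fin_bound_summable[OF nn fin])
    then show ?thesis unfolding A_def B_def g_def .
  qed
qed

lemma cnorm2sq_eq: "cnorm2sq a = (norm a)\<^sup>2"
  unfolding cnorm2sq_def norm_prod_def by simp

lemma norm_scal2: "norm (scal2 c a) = cmod c * norm a"
proof -
  have "(norm (scal2 c a))\<^sup>2 = (cmod c * norm a)\<^sup>2"
    unfolding norm_prod_def scal2_def by (simp add: norm_mult power_mult_distrib algebra_simps)
  then show ?thesis by (simp add: power2_eq_iff_nonneg)
qed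

lemma norm_Apow: "norm (Apow L \<sigma> u k) = ksq L k powr \<sigma> * norm (u k)"
  unfolding Apow_def norm_scal2 by simp

lemma powr_half_nat:
  fixes x :: real
  assumes "x \<ge> 0" "m > 0"
  shows "x powr (real m / 2) = sqrt x ^ m"
proof (cases "x = 0")
  case True then show ?thesis using assms by simp
next
  case False
  then have x: "x > 0" using assms by simp
  have "sqrt x ^ m = (x powr (1/2)) ^ m" using x by (simp add: powr_half_sqrt)
  also have "\<dots> = (x powr (1/2)) powr (real m)" using x by (simp add: powr_realpow)
  also have "\<dots> = x powr (real m / 2)" by (simp add: powr_powr)
  finally show ?thesis by simp
qed

lemma ksq_powr: "m > 0 \<Longrightarrow> ksq L k powr (real m / 2) = ks L k ^ m"
  unfolding ks_def by (rule powr_half_nat[OF ksq_nonneg])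

lemma cs2:
  fixes a b c d :: real
  shows "a * b + c * d \<le> sqrt (a\<^sup>2 + c\<^sup>2) * sqrt (b\<^sup>2 + d\<^sup>2)"
proof -
  have "(a * b + c * d)\<^sup>2 \<le> (a\<^sup>2 + c\<^sup>2) * (b\<^sup>2 + d\<^sup>2)"
    using zero_le_power2[of "a * d - b * c"] by (simp add: power2_eq_square algebra_simps)
  then have "\<bar>a * b + c * d\<bar> \<le> sqrt ((a\<^sup>2 + c\<^sup>2) * (b\<^sup>2 + d\<^sup>2))"
    using real_sqrt_le_mono by (metis real_sqrt_abs)
  then show ?thesis by (simp add: real_sqrt_mult)
qed

lemma cmod_cs2:
  fixes x1 x2 y1 y2 :: complex
  shows "cmod (x1 * y1 + x2 * y2) \<le> sqrt ((cmod x1)\<^sup>2 + (cmod x2)\<^sup>2) * sqrt ((cmod y1)\<^sup>2 + (cmod y2)\<^sup>2)"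
proof -
  have "cmod (x1 * y1 + x2 * y2) \<le> cmod x1 * cmod y1 + cmod x2 * cmod y2"
    by (metis norm_mult norm_triangle_ineq)
  also have "\<dots> \<le> sqrt ((cmod x1)\<^sup>2 + (cmod x2)\<^sup>2) * sqrt ((cmod y1)\<^sup>2 + (cmod y2)\<^sup>2)"
    by (rule cs2)
  finally show ?thesis .
qed

lemma kdot_bound: "cmod (kdot \<kappa> a) \<le> norm \<kappa> * norm a"
  unfolding kdot_def norm_prod_def
  using cmod_cs2[of "of_real (fst \<kappa>)" "fst a" "of_real (snd \<kappa>)" "snd a"] by simp

lemma cinner2_bound: "cmod (cinner2 a b) \<le> norm a * norm b"
  unfolding cinner2_def norm_prod_def
  using cmod_cs2[of "fst a" "cnj (fst b)" "snd a" "cnj (snd b)"] by simp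

lemma leray_bound:
  assumes L: "L > 0"
  shows "norm (leray L k a) \<le> norm a"
proof (cases "k = (0, 0)")
  case True then show ?thesis unfolding leray_def by simp
next
  case False
  define x where "x = fst (kappa L k)"
  define y where "y = snd (kappa L k)"
  define s where "s = ksq L k"
  have s: "s = x\<^sup>2 + y\<^sup>2" unfolding s_def x_def y_def ksq_def ..
  have spos: "s > 0"
  proof -
    have "s \<ge> (2 * pi / L)\<^sup>2" unfolding s_def by (rule ksq_ge) (use False in \<open>simp add: zero_prod_def\<close>)
    moreover have "(2 * pi / L)\<^sup>2 > 0" using L by simp
    ultimately show ?thesis by linarith
  qed
  obtain p1 q1 where a1: "fst a = Complex p1 q1" by (metis complex.exhaust)
  obtain p2 q2 where a2: "snd a = Complex p2 q2" by (metis complex.exhaust)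
  have lr: "leray L k a = (fst a - kdot (x, y) a / of_real s * of_real x, snd a - kdot (x, y) a / of_real s * of_real y)"
    unfolding leray_def x_def y_def s_def using False by simp
  define t where "t = (x * p1 + y * p2) / s"
  define u where "u = (x * q1 + y * q2) / s"
  have kd: "kdot (x, y) a / of_real s = Complex t u"
    unfolding kdot_def t_def u_def using a1 a2 spos by (simp add: complex_eq_iff Re_divide Im_divide power2_eq_square field_simps)
  have c1: "fst (leray L k a) = Complex (p1 - t * x) (q1 - u * x)"
    unfolding lr kd using a1 by (simp add: complex_eq_iff)
  have c2: "snd (leray L k a) = Complex (p2 - t * y) (q2 - u * y)"
    unfolding lr kd using a2 by (simp add: complex_eq_iff)
  have "(norm (leray L k a))\<^sup>2 = (p1 - t * x)\<^sup>2 + (q1 - u * x)\<^sup>2 + (p2 - t * y)\<^sup>2 + (q2 - u * y)\<^sup>2"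
    unfolding norm_prod_def c1 c2 by (simp add: cmod_power2)
  also have "\<dots> = (norm a)\<^sup>2 - ((x * p1 + y * p2)\<^sup>2 + (x * q1 + y * q2)\<^sup>2) / s"
  proof -
    have e1: "(p1 - t * x)\<^sup>2 + (p2 - t * y)\<^sup>2 = p1\<^sup>2 + p2\<^sup>2 - 2 * t * (x * p1 + y * p2) + t\<^sup>2 * s"
      unfolding s by (simp add: power2_eq_square algebra_simps)
    have e2: "(q1 - u * x)\<^sup>2 + (q2 - u * y)\<^sup>2 = q1\<^sup>2 + q2\<^sup>2 - 2 * u * (x * q1 + y * q2) + u\<^sup>2 * s"
      unfolding s by (simp add: power2_eq_square algebra_simps)
    have e3: "- 2 * t * (x * p1 + y * p2) + t\<^sup>2 * s = - (x * p1 + y * p2)\<^sup>2 / s"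
      unfolding t_def using spos by (simp add: field_simps power2_eq_square)
    have e4: "- 2 * u * (x * q1 + y * q2) + u\<^sup>2 * s = - (x * q1 + y * q2)\<^sup>2 / s"
      unfolding u_def using spos by (simp add: field_simps power2_eq_square)
    have na: "(norm a)\<^sup>2 = p1\<^sup>2 + q1\<^sup>2 + p2\<^sup>2 + q2\<^sup>2"
      unfolding norm_prod_def a1 a2 by (simp add: cmod_power2)
    show ?thesis unfolding na using e1 e2 e3 e4 by (simp add: diff_divide_distrib add_divide_distrib)
  qed
  also have "\<dots> \<le> (norm a)\<^sup>2" using spos by simp
  finally show ?thesis by (simp add: power2_le_iff_abs_le)
qed

lemma fin_supp:
  fixes f :: "'a \<Rightarrow> 'b::{topological_comm_monoid_add, t2_space}"
  assumes "finite B" "\<And>x. x \<notin> B \<Longrightarrow> f x = 0"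
  shows "f summable_on UNIV \<and> infsum f UNIV = sum f B"
proof -
  have "(f has_sum sum f B) UNIV" by (rule has_sum_finite_neutralI) (use assms in auto)
  then show ?thesis by (simp add: has_sum_iff)
qed

definition ztest :: field2 where
  "ztest = (\<lambda>k. if k = (1, 0) \<or> k = (-1, 0) then (0, 1) else (0, 0))"

lemma ztest_S: "finite {(1::int, 0::int), (-1, 0)}" by simp

lemma ztest_out: "k \<notin> {(1, 0), (-1, 0)} \<Longrightarrow> ztest k = (0, 0)"
  unfolding ztest_def by auto

lemma scal2_zero: "scal2 c (0, 0) = (0, 0)" unfolding scal2_def by simp

lemma agmon_const:
  assumes L: "L > 0"
    and agmon: "\<forall>z. inD L 1 z \<and> realH z \<longrightarrow>
                   Linf L z \<le> cA * sqrt (hnorm L z) * sqrt (hnorm L (Apow L 1 z))"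
  shows "cA \<ge> 1 / (sqrt 2 * pi)"
proof -
  define S where "S = {(1::int, 0::int), (-1, 0)}"
  define c where "c = 2 * pi / L"
  have c: "c > 0" using L by (simp add: c_def)
  have S: "finite S" unfolding S_def by simp
  have out: "k \<notin> S \<Longrightarrow> ztest k = (0, 0)" for k unfolding S_def by (rule ztest_out)
  have kq: "ksq L (1, 0) = c\<^sup>2" "ksq L (-1, 0) = c\<^sup>2" unfolding ksq_eq c_def by simp_all
  have s1: "(\<lambda>k. cnorm2sq (ztest k)) summable_on UNIV \<and> infsum (\<lambda>k. cnorm2sq (ztest k)) UNIV = 2"
    using fin_supp[OF S, of "\<lambda>k. cnorm2sq (ztest k)"] out
    unfolding S_def by (simp add: cnorm2sq_def ztest_def)
  have s2: "(\<lambda>k. cnorm2sq (Apow L 1 ztest k)) summable_on UNIV \<and> infsum (\<lambda>k. cnorm2sq (Apow L 1 ztest k)) UNIV = 2 * (c\<^sup>2)\<^sup>2"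
    using fin_supp[OF S, of "\<lambda>k. cnorm2sq (Apow L 1 ztest k)"] out kq c
    unfolding S_def by (simp add: cnorm2sq_def ztest_def Apow_def scal2_def)
  have inH: "inHc L ztest"
    unfolding inHc_def using s1
    by (auto simp: ztest_def kdot_def kappa_def)
  have inD: "inD L 1 ztest" unfolding inD_def using inH s2 by simp
  have re: "realH ztest" unfolding realH_def ztest_def by (auto simp: prod_eq_iff)
  have ev: "evalF L ztest x = (\<Sum>k\<in>S. scal2 (cis (fst (kappa L k) * fst x + snd (kappa L k) * snd x)) (ztest k))" for x
    unfolding evalF_def
    by (rule conjunct2[OF fin_supp[OF S]]) (simp add: out scal2_zero zero_prod_def)
  have bnd: "norm (evalF L ztest x) \<le> 2" for x
  proof -
    have "norm (evalF L ztest x) \<le> (\<Sum>k\<in>S. norm (scal2 (cis (fst (kappa L k) * fst x + snd (kappa L k) * snd x)) (ztest k)))"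
      unfolding ev by (rule norm_sum)
    also have "\<dots> = 2" unfolding S_def by (simp add: norm_scal2 ztest_def norm_Pair)
    finally show ?thesis .
  qed
  have v0: "norm (evalF L ztest (0, 0)) = 2"
    unfolding ev S_def by (simp add: scal2_def ztest_def norm_Pair)
  have hh: "sqrt (hnorm L ztest) * sqrt (hnorm L (Apow L 1 ztest)) = sqrt 2 * L * c"
  proof -
    have h1: "hnorm L ztest = sqrt 2 * L" unfolding hnorm_def using s1 L by (simp add: real_sqrt_mult)
    have c4e: "c ^ 4 = (c\<^sup>2)\<^sup>2" by (simp flip: power_mult)
    have c4: "sqrt (c ^ 4) = c\<^sup>2" unfolding c4e real_sqrt_abs by simp
    have h2: "hnorm L (Apow L 1 ztest) = sqrt 2 * L * c\<^sup>2" unfolding hnorm_def using s2 L c c4 by (simp add: real_sqrt_mult)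
    have "sqrt (hnorm L ztest) * sqrt (hnorm L (Apow L 1 ztest)) = sqrt ((sqrt 2 * L * c)\<^sup>2)"
      unfolding h1 h2 real_sqrt_mult[symmetric] by (simp add: power2_eq_square algebra_simps)
    then show ?thesis using L c by simp
  qed
  have l1: "2 \<le> Linf L ztest"
    unfolding Linf_def using v0 bnd
    by (metis UNIV_I bdd_aboveI2 cSUP_upper)
  have l2: "Linf L ztest \<le> cA * sqrt (hnorm L ztest) * sqrt (hnorm L (Apow L 1 ztest))"
    using agmon inD re by blast
  have "2 \<le> cA * (sqrt 2 * L * c)" using l1 l2 hh by (simp add: mult.assoc)
  then have "2 \<le> cA * (2 * sqrt 2 * pi)" unfolding c_def using L by (simp add: field_simps)
  then show ?thesis by (simp add: field_simps)
qed

definition wt :: "real \<Rightarrow> nat \<Rightarrow> field2 \<Rightarrow> int \<times> int \<Rightarrow> real" where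
  "wt L m f k = ks L k ^ m * norm (f k)"

lemma wt_nonneg: "wt L m f k \<ge> 0"
  unfolding wt_def using ks_nonneg by simp

lemma wt_zero: "f 0 = 0 \<Longrightarrow> wt L m f 0 = 0"
  unfolding wt_def by simp

lemma wt_add: "ks L k ^ n * wt L m f k = wt L (n + m) f k"
  unfolding wt_def by (simp add: power_add)

lemma hnorm_l2: "L > 0 \<Longrightarrow> hnorm L f = L * l2 (\<lambda>k. norm (f k))"
  unfolding hnorm_def l2_def cnorm2sq_eq
  by (simp add: real_sqrt_mult infsum_nonneg)

lemma hnorm_wt0: "L > 0 \<Longrightarrow> hnorm L f = L * l2 (wt L 0 f)"
  unfolding hnorm_l2 wt_def by simp

lemma hnorm_wt: "L > 0 \<Longrightarrow> m > 0 \<Longrightarrow> hnorm L (Apow L (real m / 2) f) = L * l2 (wt L m f)"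
  unfolding hnorm_l2 norm_Apow wt_def using ksq_powr[of m L] ksq_nonneg by simp

lemma inD_facts:
  assumes "inD L (real m / 2) f" "m > 0"
  shows "f 0 = 0" "(\<lambda>k. (wt L 0 f k)\<^sup>2) summable_on UNIV" "(\<lambda>k. (wt L m f k)\<^sup>2) summable_on UNIV"
proof -
  show "f 0 = 0" using assms unfolding inD_def inHc_def by (simp add: zero_prod_def)
  show "(\<lambda>k. (wt L 0 f k)\<^sup>2) summable_on UNIV" using assms unfolding inD_def inHc_def wt_def cnorm2sq_eq by simp
  have "(\<lambda>k. cnorm2sq (Apow L (real m / 2) f k)) summable_on UNIV" using assms unfolding inD_def by simp
  then show "(\<lambda>k. (wt L m f k)\<^sup>2) summable_on UNIV"
    unfolding cnorm2sq_eq norm_Apow wt_def using ksq_powr[OF assms(2)] by simp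
qed

lemma interp:
  assumes L: "L > 0" and f0: "f 0 = 0" and s: "(\<lambda>k. (wt L m f k)\<^sup>2) summable_on UNIV" and nm: "n \<le> m"
  shows "(\<lambda>k. (wt L n f k)\<^sup>2) summable_on UNIV"
proof -
  define c where "c = 2 * pi / L"
  have c: "c > 0" using L by (simp add: c_def)
  define K where "K = (c ^ (m - n))\<^sup>2"
  have K: "K > 0" using c by (simp add: K_def)
  have le: "K * (wt L n f k)\<^sup>2 \<le> (wt L m f k)\<^sup>2" for k
  proof (cases "k = 0")
    case True then show ?thesis using f0 by (simp add: wt_def)
  next
    case False
    have kc: "c \<le> ks L k" using ks_ge[OF False L] unfolding c_def .
    have "c ^ (m - n) * wt L n f k \<le> ks L k ^ (m - n) * wt L n f k"
      by (rule mult_right_mono[OF power_mono[OF kc]]) (use c wt_nonneg in \<open>auto simp: less_imp_le\<close>)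
    also have "\<dots> = wt L m f k" using wt_add[of L k "m - n" n f] nm by simp
    finally have "(c ^ (m - n) * wt L n f k)\<^sup>2 \<le> (wt L m f k)\<^sup>2"
      using c wt_nonneg by (intro power_mono) auto
    then show ?thesis by (simp add: K_def power_mult_distrib)
  qed
  have "(\<lambda>k. (wt L m f k)\<^sup>2 * (1 / K)) summable_on UNIV" using s by (rule summable_on_cmult_left)
  then show ?thesis
    by (rule summable_on_comparison_test) (use le K in \<open>auto simp: field_simps\<close>)
qed

lemma pow_convex:
  fixes a b :: real
  assumes "a \<ge> 0" "b \<ge> 0" "n \<ge> 1"
  shows "(a + b) ^ n \<le> 2 ^ (n - 1) * (a ^ n + b ^ n)"
  using assms(3)
proof (induction n rule: dec_induct)
  case base then show ?case by simp
next
  case (step n)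
  have key: "(a + b) * (a ^ n + b ^ n) \<le> 2 * (a ^ Suc n + b ^ Suc n)"
  proof (cases "a \<le> b")
    case True
    then have "a ^ n \<le> b ^ n" using assms by (intro power_mono) auto
    then have "0 \<le> (a - b) * (a ^ n - b ^ n)" using True by (intro mult_nonpos_nonpos) auto
    then show ?thesis by (simp add: algebra_simps)
  next
    case False
    then have "b ^ n \<le> a ^ n" using assms by (intro power_mono) auto
    then have "0 \<le> (a - b) * (a ^ n - b ^ n)" using False by (intro mult_nonneg_nonneg) auto
    then show ?thesis by (simp add: algebra_simps)
  qed
  have "(a + b) ^ Suc n = (a + b) * (a + b) ^ n" by simp
  also have "\<dots> \<le> (a + b) * (2 ^ (n - 1) * (a ^ n + b ^ n))"
    using step.IH assms by (intro mult_left_mono) auto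
  also have "\<dots> = 2 ^ (n - 1) * ((a + b) * (a ^ n + b ^ n))" by simp
  also have "\<dots> \<le> 2 ^ (n - 1) * (2 * (a ^ Suc n + b ^ Suc n))"
    using key by (intro mult_left_mono) auto
  also have "\<dots> = 2 ^ (Suc n - 1) * (a ^ Suc n + b ^ Suc n)"
    using step.hyps by (cases n) auto
  finally show ?case .
qed

lemma Bop_eq: "Bop L u v k = leray L k (infsum (\<lambda>p. scal2 (\<i> * kdot (kappa L (k - p)) (u p)) (v (k - p))) UNIV)"
proof -
  have "(fst k - fst p, snd k - snd p) = k - p" for p :: "int \<times> int" by (simp add: prod_eq_iff)
  then show ?thesis unfolding Bop_def by simp
qed

lemma term_bound:
  "norm (scal2 (\<i> * kdot (kappa L (k - p)) (u p)) (v (k - p))) \<le> wt L 0 u p * wt L 1 v (k - p)"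
proof -
  have "norm (scal2 (\<i> * kdot (kappa L (k - p)) (u p)) (v (k - p))) = cmod (kdot (kappa L (k - p)) (u p)) * norm (v (k - p))"
    unfolding norm_scal2 by (simp add: norm_mult)
  also have "\<dots> \<le> (norm (kappa L (k - p)) * norm (u p)) * norm (v (k - p))"
    by (rule mult_right_mono[OF kdot_bound]) simp
  also have "\<dots> = wt L 0 u p * wt L 1 v (k - p)" unfolding wt_def ks_norm by simp
  finally show ?thesis .
qed

lemma conv_main:
  fixes L :: real and \<alpha> :: nat and u v w :: field2
  assumes L: "L > 0" and a1: "\<alpha> \<ge> 1"
    and nu: "wt L 0 u summable_on UNIV"
    and Zs: "wt L 1 v summable_on UNIV"
    and Z2: "(\<lambda>k. (wt L 1 v k)\<^sup>2) summable_on UNIV"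
    and X2: "(\<lambda>k. (wt L (\<alpha> + 1) v k)\<^sup>2) summable_on UNIV"
    and Y2: "(\<lambda>k. (wt L \<alpha> u k)\<^sup>2) summable_on UNIV"
    and C2: "(\<lambda>k. (wt L \<alpha> w k)\<^sup>2) summable_on UNIV"
  shows "(\<lambda>k. cmod (cinner2 (Bop L u v k) (Apow L (real \<alpha>) w k))) summable_on UNIV \<and>
    infsum (\<lambda>k. cmod (cinner2 (Bop L u v k) (Apow L (real \<alpha>) w k))) UNIV
      \<le> 2 ^ (\<alpha> - 1) * (infsum (wt L 0 u) UNIV * (l2 (wt L (\<alpha> + 1) v) * l2 (wt L \<alpha> w))
                      + infsum (wt L 1 v) UNIV * (l2 (wt L \<alpha> u) * l2 (wt L \<alpha> w)))"
proof -
  define nu where "nu = wt L 0 u"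
  define Z where "Z = wt L 1 v"
  define X where "X = wt L (\<alpha> + 1) v"
  define Y where "Y = wt L \<alpha> u"
  define C where "C = wt L \<alpha> w"
  define T0 where "T0 k = infsum (\<lambda>p. nu p * Z (k - p)) UNIV" for k
  define T1 where "T1 k = infsum (\<lambda>p. nu p * X (k - p)) UNIV" for k
  define T2 where "T2 k = infsum (\<lambda>p. Z p * Y (k - p)) UNIV" for k
  have nn: "nu x \<ge> 0" "Z x \<ge> 0" "X x \<ge> 0" "Y x \<ge> 0" "C x \<ge> 0" for x
    unfolding nu_def Z_def X_def Y_def C_def by (auto simp: wt_nonneg)
  have Zb: "Z x \<le> l2 Z" for x using le_l2[OF Z2] wt_nonneg unfolding Z_def by blast
  have Xb: "X x \<le> l2 X" for x using le_l2[OF X2] wt_nonneg unfolding X_def by blast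
  have Yb: "Y x \<le> l2 Y" for x using le_l2[OF Y2] wt_nonneg unfolding Y_def by blast
  have nus: "nu summable_on UNIV" using nu unfolding nu_def .
  have Zs': "Z summable_on UNIV" using Zs unfolding Z_def .
  have s0: "(\<lambda>p. nu p * Z (k - p)) summable_on UNIV" for k
    using l1_times_bounded[OF nus nn(1), of "\<lambda>p. Z (k - p)"] nn Zb by blast
  have s1: "(\<lambda>p. nu p * X (k - p)) summable_on UNIV" for k
    using l1_times_bounded[OF nus nn(1), of "\<lambda>p. X (k - p)"] nn Xb by blast
  have s2': "(\<lambda>p. Z p * Y (k - p)) summable_on UNIV" for k
    using l1_times_bounded[OF Zs' nn(2), of "\<lambda>p. Y (k - p)"] nn Yb by blast
  have s2: "(\<lambda>p. Y p * Z (k - p)) summable_on UNIV" for k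
  proof -
    have "(\<lambda>p. (\<lambda>q. Z q * Y (k - q)) (k - p)) summable_on UNIV"
      using summable_on_reindex_bij_betw[OF bij_minus[of k], of "\<lambda>q. Z q * Y (k - q)"] s2'[of k] by simp
    then show ?thesis by (simp add: mult.commute)
  qed
  have T2e: "T2 k = infsum (\<lambda>p. Y p * Z (k - p)) UNIV" for k
  proof -
    have "infsum (\<lambda>p. (\<lambda>q. Z q * Y (k - q)) (k - p)) UNIV = T2 k"
      unfolding T2_def by (rule infsum_reindex_bij_betw[OF bij_minus])
    then show ?thesis by (simp add: mult.commute)
  qed
  have leib: "T0 k * ks L k ^ \<alpha> \<le> 2 ^ (\<alpha> - 1) * (T1 k + T2 k)" for k
  proof -
    have "T0 k * ks L k ^ \<alpha> = infsum (\<lambda>p. nu p * Z (k - p) * ks L k ^ \<alpha>) UNIV"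
      unfolding T0_def by (rule infsum_cmult_left[symmetric]) (use s0 in auto)
    also have "\<dots> \<le> infsum (\<lambda>p. 2 ^ (\<alpha> - 1) * (nu p * X (k - p) + Y p * Z (k - p))) UNIV"
    proof (rule infsum_mono)
      show "(\<lambda>p. nu p * Z (k - p) * ks L k ^ \<alpha>) summable_on UNIV"
        using s0 by (rule summable_on_cmult_left)
      show "(\<lambda>p. 2 ^ (\<alpha> - 1) * (nu p * X (k - p) + Y p * Z (k - p))) summable_on UNIV"
        by (rule summable_on_cmult_right, rule summable_on_add[OF s1 s2])
      fix p
      have "ks L k ^ \<alpha> \<le> (ks L p + ks L (k - p)) ^ \<alpha>"
        by (rule power_mono[OF ks_tri ks_nonneg])
      also have "\<dots> \<le> 2 ^ (\<alpha> - 1) * (ks L p ^ \<alpha> + ks L (k - p) ^ \<alpha>)"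
        by (rule pow_convex[OF ks_nonneg ks_nonneg a1])
      finally have kb: "ks L k ^ \<alpha> \<le> 2 ^ (\<alpha> - 1) * (ks L p ^ \<alpha> + ks L (k - p) ^ \<alpha>)" .
      have "nu p * Z (k - p) * ks L k ^ \<alpha> \<le> nu p * Z (k - p) * (2 ^ (\<alpha> - 1) * (ks L p ^ \<alpha> + ks L (k - p) ^ \<alpha>))"
        by (rule mult_left_mono[OF kb]) (use nn in simp)
      also have "\<dots> = 2 ^ (\<alpha> - 1) * (nu p * X (k - p) + Y p * Z (k - p))"
        unfolding nu_def Z_def X_def Y_def wt_def by (simp add: algebra_simps)
      finally show "nu p * Z (k - p) * ks L k ^ \<alpha> \<le> 2 ^ (\<alpha> - 1) * (nu p * X (k - p) + Y p * Z (k - p))" .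
    qed
    also have "\<dots> = 2 ^ (\<alpha> - 1) * (T1 k + T2 k)"
      unfolding T1_def T2e
      by (subst infsum_cmult_right) (auto intro!: summable_on_add s1 s2 simp: infsum_add[OF s1 s2])
    finally show ?thesis .
  qed
  have gb: "cmod (cinner2 (Bop L u v k) (Apow L (real \<alpha>) w k)) \<le> 2 ^ (\<alpha> - 1) * (T1 k * C k + T2 k * C k)" for k
  proof -
    define S where "S = infsum (\<lambda>p. scal2 (\<i> * kdot (kappa L (k - p)) (u p)) (v (k - p))) UNIV"
    have abs: "(\<lambda>p. norm (scal2 (\<i> * kdot (kappa L (k - p)) (u p)) (v (k - p)))) summable_on UNIV"
      by (rule summable_on_comparison_test[OF s0[of k]]) (use term_bound in \<open>auto simp: nu_def Z_def\<close>)
    have "norm S \<le> infsum (\<lambda>p. norm (scal2 (\<i> * kdot (kappa L (k - p)) (u p)) (v (k - p)))) UNIV"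
      unfolding S_def by (rule norm_infsum_bound) (use abs in simp)
    also have "\<dots> \<le> T0 k"
      unfolding T0_def by (rule infsum_mono[OF abs s0]) (use term_bound in \<open>auto simp: nu_def Z_def\<close>)
    finally have nS: "norm S \<le> T0 k" .
    have nB: "norm (Bop L u v k) \<le> T0 k"
      unfolding Bop_eq S_def[symmetric] using leray_bound[OF L, of k S] nS by linarith
    have nA: "norm (Apow L (real \<alpha>) w k) = ks L k ^ \<alpha> * C k"
    proof -
      have "real \<alpha> = real (2 * \<alpha>) / 2" by simp
      then have "ksq L k powr real \<alpha> = ks L k ^ (2 * \<alpha>)"
        using ksq_powr[of "2 * \<alpha>" L k] a1 by simp
      then show ?thesis unfolding norm_Apow C_def wt_def by (simp add: power_add mult_2)
    qed
    have "cmod (cinner2 (Bop L u v k) (Apow L (real \<alpha>) w k)) \<le> norm (Bop L u v k) * (ks L k ^ \<alpha> * C k)"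
      using cinner2_bound nA by metis
    also have "\<dots> \<le> T0 k * (ks L k ^ \<alpha> * C k)"
      by (rule mult_right_mono[OF nB]) (use nn ks_nonneg in simp)
    also have "\<dots> = (T0 k * ks L k ^ \<alpha>) * C k" by simp
    also have "\<dots> \<le> (2 ^ (\<alpha> - 1) * (T1 k + T2 k)) * C k"
      by (rule mult_right_mono[OF leib]) (use nn in simp)
    also have "\<dots> = 2 ^ (\<alpha> - 1) * (T1 k * C k + T2 k * C k)" by (simp add: algebra_simps)
    finally show ?thesis .
  qed
  have y1: "(\<lambda>k. T1 k * C k) summable_on UNIV \<and> infsum (\<lambda>k. T1 k * C k) UNIV \<le> infsum nu UNIV * (l2 X * l2 C)"
    unfolding T1_def by (rule young[OF nus nn(1) X2[folded X_def] nn(3) C2[folded C_def] nn(5)])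
  have y2: "(\<lambda>k. T2 k * C k) summable_on UNIV \<and> infsum (\<lambda>k. T2 k * C k) UNIV \<le> infsum Z UNIV * (l2 Y * l2 C)"
    unfolding T2_def by (rule young[OF Zs' nn(2) Y2[folded Y_def] nn(4) C2[folded C_def] nn(5)])
  define H where "H k = 2 ^ (\<alpha> - 1) * (T1 k * C k + T2 k * C k)" for k
  have Hs: "H summable_on UNIV" unfolding H_def using y1 y2
    by (intro summable_on_cmult_right summable_on_add) auto
  have HI: "infsum H UNIV \<le> 2 ^ (\<alpha> - 1) * (infsum nu UNIV * (l2 X * l2 C) + infsum Z UNIV * (l2 Y * l2 C))"
  proof -
    have "infsum H UNIV = 2 ^ (\<alpha> - 1) * (infsum (\<lambda>k. T1 k * C k) UNIV + infsum (\<lambda>k. T2 k * C k) UNIV)"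
      unfolding H_def using y1 y2 by (subst infsum_cmult_right) (auto intro!: summable_on_add simp: infsum_add)
    then show ?thesis using y1 y2 by (simp add: add_mono)
  qed
  have gs: "(\<lambda>k. cmod (cinner2 (Bop L u v k) (Apow L (real \<alpha>) w k))) summable_on UNIV"
    by (rule summable_on_comparison_test[OF Hs]) (use gb in \<open>auto simp: H_def\<close>)
  have "infsum (\<lambda>k. cmod (cinner2 (Bop L u v k) (Apow L (real \<alpha>) w k))) UNIV \<le> infsum H UNIV"
    by (rule infsum_mono[OF gs Hs]) (use gb in \<open>auto simp: H_def\<close>)
  then show ?thesis using gs HI unfolding nu_def Z_def X_def Y_def C_def by linarith
qed

theorem lemma5p2:
  fixes L cA :: real and \<alpha> :: nat and u v w :: field2
  assumes L: "L > 0"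
    and agmon: "\<forall>z. inD L 1 z \<and> realH z \<longrightarrow>
                   Linf L z \<le> cA * sqrt (hnorm L z) * sqrt (hnorm L (Apow L 1 z))"
    and alpha: "\<alpha> > 3"
    and u: "inD L (real \<alpha> / 2) u"
    and v: "inD L ((real \<alpha> + 1) / 2) v"
    and w: "inD L (real \<alpha>) w"
  shows "cmod (hinner L (Bop L u v) (Apow L (real \<alpha>) w))
    \<le> 2 powr (real \<alpha> + 3/2) * cA *
       (sqrt (hnorm L u) * sqrt (hnorm L (Apow L 1 u)) * hnorm L (Apow L ((1 + real \<alpha>) / 2) v)
        + hnorm L (Apow L (real \<alpha> / 2) u) * sqrt (hnorm L (Apow L (1/2) v))
          * sqrt (hnorm L (Apow L (3/2) v)))
       * hnorm L (Apow L (real \<alpha> / 2) w)"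
proof -
  have a4: "\<alpha> \<ge> 4" "\<alpha> > 0" "\<alpha> \<ge> 1" using alpha by auto
  have cA: "cA \<ge> 1 / (sqrt 2 * pi)" by (rule agmon_const[OF L agmon])
  have v': "inD L (real (\<alpha> + 1) / 2) v" using v by (simp add: add.commute)
  have w': "inD L (real (2 * \<alpha>) / 2) w" using w by simp
  note uf = inD_facts[OF u a4(2)]
  have pos: "\<alpha> + 1 > 0" "2 * \<alpha> > 0" using a4 by auto
  note vf = inD_facts[OF v' pos(1)]
  note wf = inD_facts[OF w' pos(2)]
  note wfs = wf(3)
  have u2: "(\<lambda>k. (wt L 2 u k)\<^sup>2) summable_on UNIV" by (rule interp[OF L uf(1) uf(3)]) (use a4 in simp)
  have v1: "(\<lambda>k. (wt L 1 v k)\<^sup>2) summable_on UNIV" by (rule interp[OF L vf(1) vf(3)]) simp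
  have v3: "(\<lambda>k. (wt L 3 v k)\<^sup>2) summable_on UNIV" by (rule interp[OF L vf(1) vf(3)]) (use a4 in simp)
  have wa: "(\<lambda>k. (wt L \<alpha> w k)\<^sup>2) summable_on UNIV" by (rule interp[OF L wf(1) wfs]) simp
  have e2u: "(\<lambda>k. ks L k ^ 2 * wt L 0 u k) = wt L 2 u" using wt_add[of L _ 2 0 u] by simp
  have e2v: "(\<lambda>k. ks L k ^ 2 * wt L 1 v k) = wt L 3 v" using wt_add[of L _ 2 1 v] by simp
  have W1: "wt L 0 u summable_on UNIV \<and> infsum (wt L 0 u) UNIV \<le> 4 / pi * L * sqrt (l2 (wt L 0 u)) * sqrt (l2 (wt L 2 u))"
  proof -
    have u2': "(\<lambda>k. (ks L k ^ 2 * wt L 0 u k)\<^sup>2) summable_on UNIV" using u2 by (simp add: wt_add)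
    show ?thesis using wiener[OF L wt_nonneg wt_zero[where f=u, OF uf(1)] uf(2) u2'] unfolding e2u .
  qed
  have W2: "wt L 1 v summable_on UNIV \<and> infsum (wt L 1 v) UNIV \<le> 4 / pi * L * sqrt (l2 (wt L 1 v)) * sqrt (l2 (wt L 3 v))"
  proof -
    have v3': "(\<lambda>k. (ks L k ^ 2 * wt L 1 v k)\<^sup>2) summable_on UNIV" using v3 by (simp add: wt_add)
    show ?thesis using wiener[OF L wt_nonneg wt_zero[where f=v, OF vf(1)] v1 v3'] unfolding e2v .
  qed
  have CM: "(\<lambda>k. cmod (cinner2 (Bop L u v k) (Apow L (real \<alpha>) w k))) summable_on UNIV \<and>
    infsum (\<lambda>k. cmod (cinner2 (Bop L u v k) (Apow L (real \<alpha>) w k))) UNIV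
      \<le> 2 ^ (\<alpha> - 1) * (infsum (wt L 0 u) UNIV * (l2 (wt L (\<alpha> + 1) v) * l2 (wt L \<alpha> w))
                      + infsum (wt L 1 v) UNIV * (l2 (wt L \<alpha> u) * l2 (wt L \<alpha> w)))"
    by (rule conv_main[OF L a4(3)]) (use W1 W2 v1 vf(3) uf(3) wa in auto)
  define A1 where "A1 = l2 (wt L 0 u)"
  define B1 where "B1 = l2 (wt L 2 u)"
  define Xn where "Xn = l2 (wt L (\<alpha> + 1) v)"
  define Yn where "Yn = l2 (wt L \<alpha> u)"
  define A2 where "A2 = l2 (wt L 1 v)"
  define B2 where "B2 = l2 (wt L 3 v)"
  define Cn where "Cn = l2 (wt L \<alpha> w)"
  have nn: "A1 \<ge> 0" "B1 \<ge> 0" "Xn \<ge> 0" "Yn \<ge> 0" "A2 \<ge> 0" "B2 \<ge> 0" "Cn \<ge> 0"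
    unfolding A1_def B1_def Xn_def Yn_def A2_def B2_def Cn_def by (auto simp: l2_nonneg)
  define Q where "Q = sqrt A1 * sqrt B1 * Xn + Yn * (sqrt A2 * sqrt B2)"
  have Q: "Q \<ge> 0" unfolding Q_def using nn by simp
  have "cmod (hinner L (Bop L u v) (Apow L (real \<alpha>) w))
      = L\<^sup>2 * cmod (infsum (\<lambda>k. cinner2 (Bop L u v k) (Apow L (real \<alpha>) w k)) UNIV)"
    unfolding hinner_def by (simp add: norm_mult norm_power)
  also have "\<dots> \<le> L\<^sup>2 * infsum (\<lambda>k. cmod (cinner2 (Bop L u v k) (Apow L (real \<alpha>) w k))) UNIV"
    by (rule mult_left_mono, rule norm_infsum_bound) (use CM in auto)
  also have "\<dots> \<le> L\<^sup>2 * (2 ^ (\<alpha> - 1) * (infsum (wt L 0 u) UNIV * (Xn * Cn) + infsum (wt L 1 v) UNIV * (Yn * Cn)))"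
    using CM unfolding Xn_def Yn_def Cn_def by (intro mult_left_mono) auto
  also have "\<dots> \<le> L\<^sup>2 * (2 ^ (\<alpha> - 1) * ((4 / pi * L * sqrt A1 * sqrt B1) * (Xn * Cn) + (4 / pi * L * sqrt A2 * sqrt B2) * (Yn * Cn)))"
    using W1 W2 nn unfolding A1_def B1_def A2_def B2_def
    by (intro mult_left_mono add_mono mult_right_mono) auto
  also have "\<dots> = (2 ^ (\<alpha> - 1) * (4 / pi)) * (L ^ 3 * Q * Cn)"
    unfolding Q_def by (simp add: algebra_simps power2_eq_square power3_eq_cube)
  also have "\<dots> \<le> (2 powr (real \<alpha> + 3/2) * cA) * (L ^ 3 * Q * Cn)"
  proof (rule mult_right_mono)
    show "0 \<le> L ^ 3 * Q * Cn" using L Q nn by simp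
    have p: "2 powr (real \<alpha> + 3/2) = 2 ^ \<alpha> * (2 * sqrt 2)"
    proof -
      have ee: "real \<alpha> + 3/2 = real \<alpha> + (1 + 1/2)" by simp
      have "2 powr (real \<alpha> + 3/2) = 2 powr (real \<alpha>) * (2 powr 1 * 2 powr (1/2))"
        unfolding ee powr_add by simp
      then show ?thesis by (simp add: powr_realpow powr_half_sqrt)
    qed
    have "2 ^ (\<alpha> - 1) * (4 / pi) = 2 ^ \<alpha> * (2 * sqrt 2) * (1 / (sqrt 2 * pi))"
    proof -
      have "(2::real) ^ \<alpha> = 2 * 2 ^ (\<alpha> - 1)" using a4 by (cases \<alpha>) auto
      then show ?thesis by (simp add: field_simps)
    qed
    also have "\<dots> \<le> 2 ^ \<alpha> * (2 * sqrt 2) * cA" using cA by (intro mult_left_mono) auto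
    finally show "2 ^ (\<alpha> - 1) * (4 / pi) \<le> 2 powr (real \<alpha> + 3/2) * cA" unfolding p .
  qed
  also have "\<dots> = 2 powr (real \<alpha> + 3/2) * cA *
       (sqrt (hnorm L u) * sqrt (hnorm L (Apow L 1 u)) * hnorm L (Apow L ((1 + real \<alpha>) / 2) v)
        + hnorm L (Apow L (real \<alpha> / 2) u) * sqrt (hnorm L (Apow L (1/2) v))
          * sqrt (hnorm L (Apow L (3/2) v)))
       * hnorm L (Apow L (real \<alpha> / 2) w)"
  proof -
    have h0: "hnorm L u = L * A1" unfolding A1_def by (rule hnorm_wt0[OF L])
    have h1: "hnorm L (Apow L 1 u) = L * B1" unfolding B1_def using hnorm_wt[OF L, of 2 u] by simp
    have h2: "hnorm L (Apow L ((1 + real \<alpha>) / 2) v) = L * Xn" unfolding Xn_def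
      using hnorm_wt[OF L, of "\<alpha> + 1" v] by (simp add: add.commute)
    have h3: "hnorm L (Apow L (real \<alpha> / 2) u) = L * Yn" unfolding Yn_def using hnorm_wt[OF L a4(2)] by simp
    have h4: "hnorm L (Apow L (1/2) v) = L * A2" unfolding A2_def using hnorm_wt[OF L, of 1 v] by simp
    have h5: "hnorm L (Apow L (3/2) v) = L * B2" unfolding B2_def using hnorm_wt[OF L, of 3 v] by simp
    have h6: "hnorm L (Apow L (real \<alpha> / 2) w) = L * Cn" unfolding Cn_def using hnorm_wt[OF L a4(2)] by simp
    have sL: "sqrt L * sqrt L = L" using L by simp
    show ?thesis unfolding h0 h1 h2 h3 h4 h5 h6 Q_def real_sqrt_mult
      using sL by (simp add: algebra_simps power3_eq_cube)
  qed
  finally show ?thesis .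
qed

end
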